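(* Fix a monomial order on $S$. Let $J,E$ be ideals of $S$ and let $\mathcal G_J$ be a Gröbner basis of $J$. The following are equivalent: (a) $E$ is S-nice with respect to $\mathcal G_J$; (b) for every Gröbner basis $\mathcal G_E$ of $E$, and every $f\in\mathcal G_J$, $g\in\mathcal G_E$, one has $S(f,g)\in E$; (c) there exists a Gröbner basis $\mathcal G_E$ of $E$ such that $S(f,g)\in E$ for all $f\in\mathcal G_J$ and $g\in\mathcal G_E$.
   Context: $K$ is a field and $S=K[x_1,\ldots,x_n]$ with a fixed monomial order. For $0\neq f\in S$, $\mathrm{in}(f)$ denotes its leading monomial and $\mathrm{LT}(f)$ its leading term. For nonzero $f,g\in S$ the S-polynomial is $S(f,g)=\frac{\mathrm{lcm}(\mathrm{in}(f),\mathrm{in}(g))}{\mathrm{LT}(f)}f-\frac{\mathrm{lcm}(\mathrm{in}(f),\mathrm{in}(g))}{\mathrm{LT}(g)}g$. Given a Gröbner basis $\mathcal G_J$ of an ideal $J$, an ideal $E$ is called S-nice with respect to $\mathcal G_J$ if $S(f,g)\in E$ for all $f\in\mathcal G_J$ and all nonzero $g\in E$. *)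

theory Defs
  imports Main "HOL-Library.Poly_Mapping"
begin

(* Monomials in the variables of type 'v (a finite type, so S = K[x_1..x_n]
   with n = CARD('v)) are exponent vectors 'v \<Rightarrow>\<^sub>0 nat; polynomials are
   finitely supported maps from monomials to coefficients. *)
type_synonym 'v monom = "'v \<Rightarrow>\<^sub>0 nat"
type_synonym ('v, 'k) mpoly = "'v monom \<Rightarrow>\<^sub>0 'k"

definition monomial_order :: "('v monom \<Rightarrow> 'v monom \<Rightarrow> bool) \<Rightarrow> bool" where
  "monomial_order ord \<longleftrightarrow>
     (\<forall>a. ord a a) \<and>
     (\<forall>a b. ord a b \<and> ord b a \<longrightarrow> a = b) \<and>
     (\<forall>a b c. ord a b \<and> ord b c \<longrightarrow> ord a c) \<and>
     (\<forall>a b. ord a b \<or> ord b a) \<and>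
     (\<forall>a. ord 0 a) \<and>
     (\<forall>a b c. ord a b \<longrightarrow> ord (a + c) (b + c)) \<and>
     wf {(a, b). ord a b \<and> a \<noteq> b}"

definition mdvd :: "'v monom \<Rightarrow> 'v monom \<Rightarrow> bool" where
  "mdvd a b \<longleftrightarrow> (\<forall>v. Poly_Mapping.lookup a v \<le> Poly_Mapping.lookup b v)"

definition mlcm :: "'v monom \<Rightarrow> 'v monom \<Rightarrow> 'v monom" where
  "mlcm a b = Abs_poly_mapping (\<lambda>v. max (Poly_Mapping.lookup a v) (Poly_Mapping.lookup b v))"

(* leading monomial in(f) (meaningful for f \<noteq> 0) *)
definition lm :: "('v monom \<Rightarrow> 'v monom \<Rightarrow> bool) \<Rightarrow> ('v, 'k::zero) mpoly \<Rightarrow> 'v monom" where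
  "lm ord f = (THE m. m \<in> Poly_Mapping.keys f \<and> (\<forall>m'\<in>Poly_Mapping.keys f. ord m' m))"

definition lc :: "('v monom \<Rightarrow> 'v monom \<Rightarrow> bool) \<Rightarrow> ('v, 'k::zero) mpoly \<Rightarrow> 'k" where
  "lc ord f = Poly_Mapping.lookup f (lm ord f)"

definition lt :: "('v monom \<Rightarrow> 'v monom \<Rightarrow> bool) \<Rightarrow> ('v, 'k::zero) mpoly \<Rightarrow> ('v, 'k) mpoly" where
  "lt ord f = Poly_Mapping.single (lm ord f) (lc ord f)"

definition spoly :: "('v monom \<Rightarrow> 'v monom \<Rightarrow> bool) \<Rightarrow> ('v, 'k::field) mpoly \<Rightarrow> ('v, 'k) mpoly \<Rightarrow> ('v, 'k) mpoly" where
  "spoly ord f g =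
    (if f = 0 \<or> g = 0 then 0 else
     (let L = mlcm (lm ord f) (lm ord g) in
       Poly_Mapping.single (L - lm ord f) (inverse (lc ord f)) * f
       - Poly_Mapping.single (L - lm ord g) (inverse (lc ord g)) * g))"

definition is_ideal :: "'a::comm_ring_1 set \<Rightarrow> bool" where
  "is_ideal I \<longleftrightarrow> 0 \<in> I \<and> (\<forall>a\<in>I. \<forall>b\<in>I. a + b \<in> I) \<and> (\<forall>r. \<forall>a\<in>I. r * a \<in> I)"

(* G is a Groebner basis of the ideal J: a finite subset of J such that the
   leading monomials of G generate in(J), i.e. every leading monomial of a
   nonzero element of J is divisible by the leading monomial of some nonzero
   element of G. *)
definition groebner_basis :: "('v monom \<Rightarrow> 'v monom \<Rightarrow> bool) \<Rightarrow> ('v, 'k::zero) mpoly set \<Rightarrow> ('v, 'k) mpoly set \<Rightarrow> bool" where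
  "groebner_basis ord G J \<longleftrightarrow> finite G \<and> G \<subseteq> J \<and>
     (\<forall>f\<in>J. f \<noteq> 0 \<longrightarrow> (\<exists>g\<in>G. g \<noteq> 0 \<and> mdvd (lm ord g) (lm ord f)))"

definition S_nice :: "('v monom \<Rightarrow> 'v monom \<Rightarrow> bool) \<Rightarrow> ('v, 'k::field) mpoly set \<Rightarrow> ('v, 'k) mpoly set \<Rightarrow> bool" where
  "S_nice ord GJ E \<longleftrightarrow> (\<forall>f\<in>GJ. \<forall>g\<in>E. g \<noteq> 0 \<longrightarrow> spoly ord f g \<in> E)"

end

theory Submission
  imports Defs
begin

lemma dickson_aux:
  fixes h :: "'a \<Rightarrow> 'v \<Rightarrow> nat"
  assumes "finite V"
  shows "\<exists>F\<subseteq>M. finite F \<and> (\<forall>m\<in>M. \<exists>a\<in>F. \<forall>v\<in>V. h a v \<le> h m v)"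
  using assms
proof (induction V arbitrary: M rule: finite_induct)
  case empty
  show ?case
  proof (cases "M = {}")
    case True then show ?thesis by auto
  next
    case False then obtain a where "a \<in> M" by auto
    then show ?thesis by (rule_tac x="{a}" in exI) auto
  qed
next
  case (insert x V)
  obtain F0 where F0: "F0 \<subseteq> M" "finite F0" "\<forall>m\<in>M. \<exists>a\<in>F0. \<forall>v\<in>V. h a v \<le> h m v"
    using insert.IH[of M] by blast
  define k where "k = Max ((\<lambda>a. h a x) ` F0)"
  have "\<forall>i. \<exists>F\<subseteq>{m\<in>M. h m x = i}. finite F \<and> (\<forall>m\<in>{m\<in>M. h m x = i}. \<exists>a\<in>F. \<forall>v\<in>V. h a v \<le> h m v)"
  proof
    fix i show "\<exists>F\<subseteq>{m\<in>M. h m x = i}. finite F \<and> (\<forall>m\<in>{m\<in>M. h m x = i}. \<exists>a\<in>F. \<forall>v\<in>V. h a v \<le> h m v)"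
      by (rule insert.IH)
  qed
  then have "\<exists>Fi. \<forall>i. Fi i \<subseteq> {m\<in>M. h m x = i} \<and> finite (Fi i) \<and> (\<forall>m\<in>{m\<in>M. h m x = i}. \<exists>a\<in>Fi i. \<forall>v\<in>V. h a v \<le> h m v)"
    by (rule choice)
  then obtain Fi where Fi0: "\<forall>i. Fi i \<subseteq> {m\<in>M. h m x = i} \<and> finite (Fi i) \<and> (\<forall>m\<in>{m\<in>M. h m x = i}. \<exists>a\<in>Fi i. \<forall>v\<in>V. h a v \<le> h m v)"
    by (elim exE)
  have Fi: "\<And>i. Fi i \<subseteq> {m\<in>M. h m x = i}" "\<And>i. finite (Fi i)"
    "\<And>i. \<forall>m\<in>{m\<in>M. h m x = i}. \<exists>a\<in>Fi i. \<forall>v\<in>V. h a v \<le> h m v"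
    using Fi0 by simp_all
  define F where "F = F0 \<union> (\<Union>i\<le>k. Fi i)"
  have "F \<subseteq> M" using F0 Fi unfolding F_def by blast
  moreover have "finite F" using F0 Fi unfolding F_def by auto
  moreover have "\<forall>m\<in>M. \<exists>a\<in>F. \<forall>v\<in>insert x V. h a v \<le> h m v"
  proof
    fix m assume m: "m \<in> M"
    then obtain a where a: "a \<in> F0" "\<forall>v\<in>V. h a v \<le> h m v" using F0 by blast
    show "\<exists>a\<in>F. \<forall>v\<in>insert x V. h a v \<le> h m v"
    proof (cases "h a x \<le> h m x")
      case True then show ?thesis using a unfolding F_def by auto
    next
      case False
      have "h a x \<le> k" unfolding k_def using a F0 by auto
      hence le: "h m x \<le> k" using False by simp
      obtain b where b: "b \<in> Fi (h m x)" "\<forall>v\<in>V. h b v \<le> h m v" using Fi(3)[of "h m x"] m by blast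
      have "h b x = h m x" using Fi(1) b by blast
      moreover have "b \<in> F" using b le unfolding F_def by auto
      ultimately show ?thesis using b(2) by (intro bexI[of _ b]) auto
    qed
  qed
  ultimately show ?case by blast
qed

lemma gb_exists:
  fixes E :: "('v::finite, 'k::field) mpoly set"
  shows "\<exists>G. groebner_basis ord G E"
proof -
  define M where "M = E - {0}"
  obtain F where F: "F \<subseteq> M" "finite F"
    "\<forall>m\<in>M. \<exists>a\<in>F. \<forall>v\<in>(UNIV::'v set). Poly_Mapping.lookup (lm ord a) v \<le> Poly_Mapping.lookup (lm ord m) v"
    using dickson_aux[of "UNIV::'v set" M "\<lambda>g v. Poly_Mapping.lookup (lm ord g) v"] by auto
  have "groebner_basis ord F E"
    unfolding groebner_basis_def mdvd_def using F unfolding M_def by blast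
  then show ?thesis by blast
qed

lemma lookup_mlcm: "Poly_Mapping.lookup (mlcm a b) v = max (Poly_Mapping.lookup a v) (Poly_Mapping.lookup (b::('v::finite) monom) v)"
  unfolding mlcm_def by (subst lookup_Abs_poly_mapping) auto

lemma ideal_diff: "is_ideal E \<Longrightarrow> a \<in> E \<Longrightarrow> b \<in> E \<Longrightarrow> (a::'a::comm_ring_1) - b \<in> E"
  unfolding is_ideal_def
  by (metis diff_conv_add_uminus mult_minus1)

lemma ideal_add: "is_ideal E \<Longrightarrow> a \<in> E \<Longrightarrow> b \<in> E \<Longrightarrow> (a::'a::comm_ring_1) + b \<in> E"
  unfolding is_ideal_def by blast

lemma ideal_mult: "is_ideal E \<Longrightarrow> a \<in> E \<Longrightarrow> (r::'a::comm_ring_1) * a \<in> E"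
  unfolding is_ideal_def by blast

lemma key:
  fixes E :: "('v::finite, 'k::field) mpoly set"
  assumes E: "is_ideal E" and f: "f \<noteq> 0" and g: "g \<noteq> 0" "g \<in> E" and g': "g' \<noteq> 0" "g' \<in> E"
    and d: "mdvd (lm ord g') (lm ord g)" and s: "spoly ord f g' \<in> E"
  shows "spoly ord f g \<in> E"
proof -
  define L' where "L' = mlcm (lm ord f) (lm ord g')"
  define L where "L = mlcm (lm ord f) (lm ord g)"
  define A' where "A' = Poly_Mapping.single (L' - lm ord f) (inverse (lc ord f)) * f"
  define B' where "B' = Poly_Mapping.single (L' - lm ord g') (inverse (lc ord g')) * g'"
  define A where "A = Poly_Mapping.single (L - lm ord f) (inverse (lc ord f)) * f"
  define B where "B = Poly_Mapping.single (L - lm ord g) (inverse (lc ord g)) * g"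
  have "spoly ord f g' = A' - B'" using f g' unfolding spoly_def A'_def B'_def L'_def Let_def by simp
  moreover have "B' \<in> E" unfolding B'_def using E g' ideal_mult by blast
  ultimately have "A' \<in> E" using E s ideal_add[of E "A' - B'" B'] by simp
  have mon: "(L - L') + (L' - lm ord f) = L - lm ord f"
  proof (rule poly_mapping_eqI)
    fix v
    have "Poly_Mapping.lookup (lm ord g') v \<le> Poly_Mapping.lookup (lm ord g) v" using d unfolding mdvd_def by blast
    then show "Poly_Mapping.lookup (L - L' + (L' - lm ord f)) v = Poly_Mapping.lookup (L - lm ord f) v"
      unfolding L_def L'_def by (simp add: lookup_add lookup_minus lookup_mlcm)
  qed
  have "A = Poly_Mapping.single (L - L') 1 * A'"
    unfolding A_def A'_def by (simp add: mult.assoc[symmetric] mult_single mon)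
  hence "A \<in> E" using ideal_mult[OF E \<open>A' \<in> E\<close>] by simp
  moreover have "B \<in> E" unfolding B_def using E g ideal_mult by blast
  moreover have "spoly ord f g = A - B" using f g unfolding spoly_def A_def B_def L_def Let_def by simp
  ultimately show ?thesis using ideal_diff[OF E] by simp
qed

theorem mainTheorem15:
  fixes ord :: "('v::finite) monom \<Rightarrow> 'v monom \<Rightarrow> bool"
    and J E GJ :: "('v, 'k::field) mpoly set"
  assumes "monomial_order ord"
    and "is_ideal J" and "is_ideal E"
    and "groebner_basis ord GJ J"
  shows "(S_nice ord GJ E
            \<longleftrightarrow> (\<forall>GE. groebner_basis ord GE E \<longrightarrow> (\<forall>f\<in>GJ. \<forall>g\<in>GE. spoly ord f g \<in> E)))
       \<and> ((\<forall>GE. groebner_basis ord GE E \<longrightarrow> (\<forall>f\<in>GJ. \<forall>g\<in>GE. spoly ord f g \<in> E))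
            \<longleftrightarrow> (\<exists>GE. groebner_basis ord GE E \<and> (\<forall>f\<in>GJ. \<forall>g\<in>GE. spoly ord f g \<in> E)))"
proof -
  have E0: "0 \<in> E" using assms(3) unfolding is_ideal_def by blast
  have ab: "S_nice ord GJ E \<Longrightarrow> (\<forall>GE. groebner_basis ord GE E \<longrightarrow> (\<forall>f\<in>GJ. \<forall>g\<in>GE. spoly ord f g \<in> E))"
  proof (intro allI impI ballI)
    fix GE f g assume n: "S_nice ord GJ E" and gb: "groebner_basis ord GE E" and f: "f \<in> GJ" and g: "g \<in> GE"
    show "spoly ord f g \<in> E"
    proof (cases "g = 0")
      case True then show ?thesis using E0 unfolding spoly_def by simp
    next
      case False then show ?thesis using n gb f g unfolding S_nice_def groebner_basis_def by blast
    qed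
  qed
  have bc: "(\<forall>GE. groebner_basis ord GE E \<longrightarrow> (\<forall>f\<in>GJ. \<forall>g\<in>GE. spoly ord f g \<in> E))
     \<Longrightarrow> (\<exists>GE. groebner_basis ord GE E \<and> (\<forall>f\<in>GJ. \<forall>g\<in>GE. spoly ord f g \<in> E))"
    using gb_exists[of ord E] by blast
  have ca: "(\<exists>GE. groebner_basis ord GE E \<and> (\<forall>f\<in>GJ. \<forall>g\<in>GE. spoly ord f g \<in> E)) \<Longrightarrow> S_nice ord GJ E"
  proof -
    assume "\<exists>GE. groebner_basis ord GE E \<and> (\<forall>f\<in>GJ. \<forall>g\<in>GE. spoly ord f g \<in> E)"
    then obtain GE where gb: "groebner_basis ord GE E" and sp: "\<forall>f\<in>GJ. \<forall>g\<in>GE. spoly ord f g \<in> E" by blast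
    show "S_nice ord GJ E" unfolding S_nice_def
    proof (intro ballI impI)
      fix f g assume f: "f \<in> GJ" and g: "g \<in> E" "g \<noteq> 0"
      show "spoly ord f g \<in> E"
      proof (cases "f = 0")
        case True then show ?thesis using E0 unfolding spoly_def by simp
      next
        case False
        obtain g' where g': "g' \<in> GE" "g' \<noteq> 0" "mdvd (lm ord g') (lm ord g)" using gb g unfolding groebner_basis_def by blast
        have "g' \<in> E" using gb g' unfolding groebner_basis_def by blast
        show ?thesis using key[OF assms(3) False g(2) g(1) g'(2) \<open>g' \<in> E\<close> g'(3)] sp f g' by blast
      qed
    qed
  qed
  show ?thesis using ab bc ca by blast
qed

end
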